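(* Let $i$ be a unit with an even number $n_i\ge4$ of observations $X_{ij}$, $j\in[n_i]$, i.i.d. $\mathcal N(0,1)$. Randomly (independently of the data) split $[n_i]$ into $\mathcal{N}_{i1},\mathcal{N}_{i2}$ of equal size $n_i/2$, let $\bar X_{i1},\bar X_{i2}$ be the corresponding sample means, $V_i=\bar X_{i1}+\bar X_{i2}$, $V_i^0=\bar X_{i1}-\bar X_{i2}$, and $S_i^*=\sqrt{\frac1{n_i-1}\sum_{j=1}^{n_i}(X_{ij}-\bar X_i)^2}$ with $\bar X_i$ the mean of all $n_i$ observations. Define $T_i^*=\Phi^{-1}\{G_{t,n_i-2}(V_i/S_i^* )\}$ and $T_i^{0,*}=\Phi^{-1}\{G_{t,n_i-2}(V_i^0/S_i^* )\}$. Then $T_i^*$ and $T_i^{0,*}$ do not have the same distribution; consequently, for any family of such pairs $(T_k^*,T_k^{0,*})_{k\in[m]}$ containing unit $i$, $(T_i^*,T_i^{0,*}\mid\mathbf{T}^*_{-i},\mathbf{T}^{0,*}_{-i})\not\stackrel{d}{=}(T_i^{0,*},T_i^*\mid\mathbf{T}^*_{-i},\mathbf{T}^{0,*}_{-i})$, i.e. pairwise exchangeability fails.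
   Context: $\Phi$ is the standard normal CDF, $G_{t,\nu}$ the CDF of the $t_\nu$ distribution; $\mathbf{T}^*_{-i}=(T^*_k:k\ne i)$, $\mathbf{T}^{0,*}_{-i}=(T^{0,*}_k:k\ne i)$. *)

theory Defs
  imports "HOL-Probability.Probability"
begin

definition Phi :: "real \<Rightarrow> real" where
  "Phi x = (\<integral>t. indicator {..x} t * std_normal_density t \<partial>lborel)"

definition Phi_inv :: "real \<Rightarrow> real" where
  "Phi_inv p = (THE x. Phi x = p)"

definition t_density :: "real \<Rightarrow> real \<Rightarrow> real" where
  "t_density \<nu> x = Gamma ((\<nu> + 1) / 2) / (sqrt (\<nu> * pi) * Gamma (\<nu> / 2))
                     * (1 + x\<^sup>2 / \<nu>) powr (- (\<nu> + 1) / 2)"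

definition t_CDF :: "real \<Rightarrow> real \<Rightarrow> real" where
  "t_CDF \<nu> x = (\<integral>t. indicator {..x} t * t_density \<nu> t \<partial>lborel)"

definition smean :: "nat set \<Rightarrow> (nat \<Rightarrow> real) \<Rightarrow> real" where
  "smean A x = (\<Sum>j\<in>A. x j) / real (card A)"

definition Sstar :: "nat \<Rightarrow> (nat \<Rightarrow> real) \<Rightarrow> real" where
  "Sstar n x = sqrt (1 / (real n - 1) * (\<Sum>j<n. (x j - smean {..<n} x)\<^sup>2))"

definition Tstar :: "nat \<Rightarrow> nat set \<Rightarrow> (nat \<Rightarrow> real) \<Rightarrow> real" where
  "Tstar n N1 x = Phi_inv (t_CDF (real n - 2)
      ((smean N1 x + smean ({..<n} - N1) x) / Sstar n x))"

definition T0star :: "nat \<Rightarrow> nat set \<Rightarrow> (nat \<Rightarrow> real) \<Rightarrow> real" where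
  "T0star n N1 x = Phi_inv (t_CDF (real n - 2)
      ((smean N1 x - smean ({..<n} - N1) x) / Sstar n x))"

end

theory Submission
  imports Defs
begin


lemma cdf_like:
  fixes f :: "real \<Rightarrow> real"
  assumes pos: "\<And>x. f x > 0" and int: "integrable lborel f"
  shows "finite_borel_measure (density lborel (\<lambda>x. ennreal (f x)))"
    and "(\<integral>t. indicator {..x} t * f t \<partial>lborel) = cdf (density lborel (\<lambda>x. ennreal (f x))) x"
proof -
  let ?M = "density lborel (\<lambda>x. ennreal (f x))"
  have fm[measurable]: "f \<in> borel_measurable borel"
    using int by (simp add: borel_measurable_integrable)
  have nn: "\<And>x. f x \<ge> 0" using pos less_imp_le by blast
  have "emeasure ?M (space ?M) = (\<integral>\<^sup>+ t. ennreal (f t) \<partial>lborel)"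
    by (simp add: emeasure_density)
  also have "\<dots> = ennreal (\<integral>t. f t \<partial>lborel)"
    using int nn by (subst nn_integral_eq_integral) auto
  finally have fin: "emeasure ?M (space ?M) \<noteq> \<infinity>" by simp
  show fb: "finite_borel_measure ?M"
    apply (rule finite_borel_measure.intro)
     apply (rule finite_measureI[OF fin])
    apply (rule finite_borel_measure_axioms.intro)
    by simp
  have i2: "integrable lborel (\<lambda>t. f t * indicator {..x} t)"
    using integrable_mult_indicator[of "{..x}" lborel f] int by (simp add: mult.commute)
  have "emeasure ?M {..x} = (\<integral>\<^sup>+ t. ennreal (f t) * indicator {..x} t \<partial>lborel)"
    by (simp add: emeasure_density)
  also have "\<dots> = (\<integral>\<^sup>+ t. ennreal (f t * indicator {..x} t) \<partial>lborel)"
    by (intro nn_integral_cong) (auto split: split_indicator)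
  also have "\<dots> = ennreal (\<integral>t. f t * indicator {..x} t \<partial>lborel)"
    using i2 nn by (subst nn_integral_eq_integral) auto
  finally have "measure ?M {..x} = (\<integral>t. f t * indicator {..x} t \<partial>lborel)"
    using nn by (simp add: measure_def integral_nonneg_AE)
  then show "(\<integral>t. indicator {..x} t * f t \<partial>lborel) = cdf ?M x"
    by (simp add: cdf_def mult.commute)
qed

lemma dens_Ioc_pos:
  fixes f :: "real \<Rightarrow> real"
  assumes pos: "\<And>x. f x > 0" and int: "integrable lborel f" and ab: "a < b"
  shows "measure (density lborel (\<lambda>x. ennreal (f x))) {a<..b} > 0"
proof -
  let ?M = "density lborel (\<lambda>x. ennreal (f x))"
  have fm[measurable]: "f \<in> borel_measurable borel"
    using int by (simp add: borel_measurable_integrable)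
  interpret finite_borel_measure ?M using cdf_like(1)[OF pos int] .
  have e: "emeasure ?M {a<..b} = (\<integral>\<^sup>+ t. ennreal (f t) * indicator {a<..b} t \<partial>lborel)"
    by (simp add: emeasure_density)
  have "emeasure ?M {a<..b} \<noteq> 0"
  proof
    assume "emeasure ?M {a<..b} = 0"
    then have "AE t in lborel. ennreal (f t) * indicator {a<..b} t = 0"
      using e by (subst nn_integral_0_iff_AE[symmetric]) auto
    then have "AE t in lborel. t \<notin> {a<..b}"
    proof (rule AE_mp, intro AE_I2 impI)
      fix t assume "ennreal (f t) * indicator {a<..b} t = 0"
      moreover have "ennreal (f t) \<noteq> 0" using pos[of t] by simp
      ultimately show "t \<notin> {a<..b}" by (auto split: split_indicator)
    qed
    then have "emeasure lborel {a<..b} = 0"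
    proof -
      have q: "{x \<in> space lborel. \<not> (x \<notin> {a<..b})} = {a<..b}" by auto
      have m: "{a<..b} \<in> sets lborel" by measurable
      from AE_iff_measurable[OF m q] show ?thesis using \<open>AE t in lborel. t \<notin> {a<..b}\<close> by blast
    qed
    moreover have "emeasure lborel {a<..b} = ennreal (b - a)" using ab by simp
    ultimately show False using ab by (simp add: ennreal_eq_0_iff)
  qed
  moreover have "emeasure ?M {a<..b} = ennreal (measure ?M {a<..b})"
    using emeasure_finite by (rule emeasure_eq_ennreal_measure)
  ultimately have "measure ?M {a<..b} \<noteq> 0" by auto
  then show ?thesis using measure_nonneg[of ?M "{a<..b}"] by linarith
qed

definition Fd :: "(real \<Rightarrow> real) \<Rightarrow> real \<Rightarrow> real" where
  "Fd f x = (\<integral>t. indicator {..x} t * f t \<partial>lborel)"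

lemma Fd_cdf:
  fixes f :: "real \<Rightarrow> real"
  assumes pos: "\<And>x. f x > 0" and int: "integrable lborel f"
  shows "Fd f = cdf (density lborel (\<lambda>x. ennreal (f x)))"
  using cdf_like(2)[OF pos int] by (auto simp: Fd_def)

lemma Fd_props:
  fixes f :: "real \<Rightarrow> real"
  assumes pos: "\<And>x. f x > 0" and int: "integrable lborel f"
  shows "\<And>x y. x \<le> y \<Longrightarrow> Fd f x \<le> Fd f y"
    and "\<And>x y. x < y \<Longrightarrow> Fd f x < Fd f y"
    and "\<And>x. Fd f x > 0"
    and "(Fd f \<longlongrightarrow> 0) at_bot"
    and "\<And>x. isCont (Fd f) x"
    and "\<And>x. Fd f x \<le> measure (density lborel (\<lambda>x. ennreal (f x))) UNIV"
    and "(Fd f \<longlongrightarrow> measure (density lborel (\<lambda>x. ennreal (f x))) UNIV) at_top"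
proof -
  let ?M = "density lborel (\<lambda>x. ennreal (f x))"
  have fm[measurable]: "f \<in> borel_measurable borel"
    using int by (simp add: borel_measurable_integrable)
  interpret finite_borel_measure ?M using cdf_like(1)[OF pos int] .
  have E: "Fd f = cdf ?M" by (rule Fd_cdf[OF pos int])
  show m: "\<And>x y. x \<le> y \<Longrightarrow> Fd f x \<le> Fd f y" unfolding E by (rule cdf_nondecreasing)
  show s: "\<And>x y. x < y \<Longrightarrow> Fd f x < Fd f y"
  proof -
    fix x y :: real assume "x < y"
    from cdf_diff_eq[OF this] dens_Ioc_pos[OF pos int this] show "Fd f x < Fd f y"
      unfolding E by linarith
  qed
  show "\<And>x. Fd f x > 0"
  proof -
    fix x
    have "Fd f (x - 1) < Fd f x" by (rule s) simp
    moreover have "Fd f (x - 1) \<ge> 0" unfolding E by (rule cdf_nonneg)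
    ultimately show "Fd f x > 0" by linarith
  qed
  show "(Fd f \<longlongrightarrow> 0) at_bot" unfolding E by (rule cdf_lim_at_bot)
  show "\<And>x. isCont (Fd f) x"
  proof -
    fix x
    have "emeasure ?M {x} = (\<integral>\<^sup>+ t. ennreal (f t) * indicator {x} t \<partial>lborel)"
      by (simp add: emeasure_density)
    also have "\<dots> = 0"
      by (subst nn_integral_indicator_singleton) auto
    finally have "measure ?M {x} = 0" by (simp add: measure_def)
    then show "isCont (Fd f) x" unfolding E by (simp add: isCont_cdf)
  qed
  show "\<And>x. Fd f x \<le> measure ?M UNIV" unfolding E using cdf_bounded by simp
  show "(Fd f \<longlongrightarrow> measure ?M UNIV) at_top" unfolding E using cdf_lim_at_top by simp
qed

lemma Phi_Fd: "Phi = Fd std_normal_density"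
  by (auto simp: Phi_def Fd_def)

lemma std_pos: "\<And>x. std_normal_density x > 0"
  by (simp add: normal_density_pos)

lemma Phi_props:
  shows "\<And>x y. x \<le> y \<Longrightarrow> Phi x \<le> Phi y"
    and "\<And>x y. x < y \<Longrightarrow> Phi x < Phi y"
    and "\<And>x. Phi x > 0"
    and "\<And>x. Phi x < 1"
    and "(Phi \<longlongrightarrow> 0) at_bot"
    and "(Phi \<longlongrightarrow> 1) at_top"
    and "\<And>x. isCont Phi x"
proof -
  note P = Fd_props[OF std_pos integrable_normal_density, folded Phi_Fd]
  have U: "measure (density lborel (\<lambda>x. ennreal (std_normal_density x))) UNIV = 1"
  proof -
    have "measure (density lborel (\<lambda>x. ennreal (std_normal_density x))) (space (density lborel (\<lambda>x. ennreal (std_normal_density x)))) = 1"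
      by (rule prob_space.prob_space[OF prob_space_normal_density]) simp
    then show ?thesis by simp
  qed
  show "\<And>x y. x \<le> y \<Longrightarrow> Phi x \<le> Phi y" "\<And>x y. x < y \<Longrightarrow> Phi x < Phi y"
    "\<And>x. Phi x > 0" "(Phi \<longlongrightarrow> 0) at_bot" "\<And>x. isCont Phi x" using P by auto
  show "(Phi \<longlongrightarrow> 1) at_top" using P(7) U by simp
  show "\<And>x. Phi x < 1"
  proof -
    fix x
    have "Phi x < Phi (x + 1)" using P(2)[of x "x + 1"] by simp
    also have "\<dots> \<le> 1" using P(6)[of "x+1"] U by simp
    finally show "Phi x < 1" .
  qed
qed

lemma Phi_surj:
  assumes "0 < p" "p < 1" shows "\<exists>x. Phi x = p"
proof -
  have "eventually (\<lambda>x. Phi x < p) at_bot"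
    using order_tendstoD(2)[OF Phi_props(5) assms(1)] .
  then obtain a where a: "Phi a < p" by (auto simp: eventually_at_bot_linorder)
  have "eventually (\<lambda>x. Phi x > p) at_top"
    using order_tendstoD(1)[OF Phi_props(6) assms(2)] .
  then obtain b0 where b0: "\<And>x. x \<ge> b0 \<Longrightarrow> Phi x > p" by (auto simp: eventually_at_top_linorder)
  define b where "b = max a b0"
  have b: "Phi b > p" "a \<le> b" using b0[of b] by (auto simp: b_def)
  have "continuous_on {a..b} Phi"
    using Phi_props(7) by (simp add: continuous_at_imp_continuous_on)
  from IVT'[of Phi a p b, OF _ _ b(2) this] a b show ?thesis by force
qed

lemma Phi_inj: "Phi x = Phi y \<Longrightarrow> x = y"
proof (rule ccontr)
  assume e: "Phi x = Phi y" and "x \<noteq> y"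
  then consider "x < y" | "y < x" by linarith
  then show False using Phi_props(2)[of x y] Phi_props(2)[of y x] e by cases auto
qed

lemma Phi_Phi_inv:
  assumes "0 < p" "p < 1" shows "Phi (Phi_inv p) = p"
proof -
  obtain x where x: "Phi x = p" using Phi_surj[OF assms] by blast
  have "Phi_inv p = x" unfolding Phi_inv_def
    by (rule the_equality) (use x Phi_inj in auto)
  with x show ?thesis by simp
qed

lemma Phi_inv_out:
  assumes "\<not> (0 < p \<and> p < 1)" shows "Phi_inv p = Phi_inv 2"
proof -
  have "\<And>x. Phi x \<noteq> p"
  proof
    fix x assume "Phi x = p" then show False using Phi_props(3)[of x] Phi_props(4)[of x] assms by simp
  qed
  moreover have "\<And>x. Phi x \<noteq> 2"
  proof
    fix x assume "Phi x = 2" then show False using Phi_props(4)[of x] by simp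
  qed
  ultimately have "(\<lambda>x. Phi x = p) = (\<lambda>x. Phi x = 2)" by auto
  then show ?thesis unfolding Phi_inv_def by simp
qed

lemma Phi_inv_mono:
  assumes "0 < p" "p \<le> q" "q < 1" shows "Phi_inv p \<le> Phi_inv q"
proof (rule ccontr)
  assume "\<not> ?thesis"
  then have "Phi (Phi_inv q) < Phi (Phi_inv p)" by (intro Phi_props(2)) simp
  then show False using Phi_Phi_inv[of p] Phi_Phi_inv[of q] assms by simp
qed

lemma Phi_inv_measurable: "Phi_inv \<in> borel_measurable borel"
proof (rule borel_measurable_piecewise_mono[of "{{0<..<1}, - {0<..<1}}"])
  show "countable {{0<..<1::real}, - {0<..<1}}" by simp
  show "\<And>c. c \<in> {{0<..<1::real}, - {0<..<1}} \<Longrightarrow> c \<in> sets borel"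
  proof -
    fix c :: "real set" assume "c \<in> {{0<..<1::real}, - {0<..<1}}"
    moreover have "{0<..<1::real} \<in> sets borel" by simp
    moreover have "- {0<..<1::real} \<in> sets borel" by (simp add: borel_comp)
    ultimately show "c \<in> sets borel" by blast
  qed
  show "\<Union> {{0<..<1::real}, - {0<..<1}} = UNIV" by auto
  show "\<And>c. c \<in> {{0<..<1::real}, - {0<..<1}} \<Longrightarrow> mono_on c Phi_inv"
  proof -
    fix c assume "c \<in> {{0<..<1::real}, - {0<..<1}}"
    then show "mono_on c Phi_inv"
    proof
      assume "c = {0<..<1}"
      then show ?thesis by (auto intro!: mono_onI Phi_inv_mono)
    next
      assume "c \<in> {- {0<..<1}}"
      then have c: "c = - {0<..<1}" by simp
      show ?thesis
      proof (rule mono_onI)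
        fix r s assume "r \<in> c" "s \<in> c" "r \<le> s"
        then have "Phi_inv r = Phi_inv 2" "Phi_inv s = Phi_inv 2"
          using c by (auto intro!: Phi_inv_out)
        then show "Phi_inv r \<le> Phi_inv s" by simp
      qed
    qed
  qed
qed


lemma td_pos: assumes "\<nu> > 0" shows "t_density \<nu> x > 0"
proof -
  have "x\<^sup>2 / \<nu> \<ge> 0" using assms by simp
  then have "1 + x\<^sup>2 / \<nu> > 0" by linarith
  then show ?thesis
    unfolding t_density_def using assms by (intro mult_pos_pos divide_pos_pos) (auto intro!: Gamma_real_pos)
qed

lemma td_meas: "t_density \<nu> \<in> borel_measurable borel"
  unfolding t_density_def by measurable

lemma inv_sq_int: "integrable lborel (\<lambda>x::real. inverse (1 + x^2))"
  using integrable_inverse_1_plus_square by (simp add: set_integrable_def)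

lemma td_int:
  assumes nu: "\<nu> \<ge> 1" shows "integrable lborel (t_density \<nu>)"
proof -
  define C where "C = Gamma ((\<nu> + 1) / 2) / (sqrt (\<nu> * pi) * Gamma (\<nu> / 2))"
  have C: "C > 0" unfolding C_def using nu by (intro divide_pos_pos mult_pos_pos) auto
  have b: "norm (t_density \<nu> x) \<le> norm (C * \<nu> * inverse (1 + x^2))" for x
  proof -
    have base: "1 \<le> 1 + x\<^sup>2 / \<nu>" using nu by simp
    have "(1 + x\<^sup>2 / \<nu>) powr (- (\<nu> + 1) / 2) \<le> (1 + x\<^sup>2 / \<nu>) powr (-1)"
      by (rule powr_mono) (use nu base in auto)
    also have "\<dots> = inverse (1 + x\<^sup>2 / \<nu>)"
      using base by (simp add: powr_minus)
    also have "\<dots> = \<nu> / (\<nu> + x\<^sup>2)"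
      using nu by (simp add: field_simps)
    also have "\<dots> \<le> \<nu> / (1 + x\<^sup>2)"
      using nu by (intro divide_left_mono) (auto intro!: mult_pos_pos add_pos_nonneg)
    finally have "(1 + x\<^sup>2 / \<nu>) powr (- (\<nu> + 1) / 2) \<le> \<nu> * inverse (1 + x ^ 2)"
      by (simp only: divide_inverse)
    then have "C * (1 + x\<^sup>2 / \<nu>) powr (- (\<nu> + 1) / 2) \<le> C * (\<nu> * inverse (1 + x ^ 2))"
      using C by (intro mult_left_mono) auto
    moreover have "t_density \<nu> x = C * (1 + x\<^sup>2 / \<nu>) powr (- (\<nu> + 1) / 2)"
      by (simp add: t_density_def C_def)
    moreover have "t_density \<nu> x > 0" using td_pos nu by simp
    moreover have "C * \<nu> * inverse (1 + x^2) \<ge> 0" using C nu by (simp add: add_pos_nonneg)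
    ultimately have "\<bar>t_density \<nu> x\<bar> \<le> \<bar>C * \<nu> * inverse (1 + x^2)\<bar>"
      by (simp only: abs_of_nonneg abs_of_pos mult.assoc)
    then show ?thesis by (simp only: real_norm_def)
  qed
  show ?thesis
  proof (rule Bochner_Integration.integrable_bound)
    show "t_density \<nu> \<in> borel_measurable lborel" using td_meas by simp
    show "integrable lborel (\<lambda>x. C * \<nu> * inverse (1 + x^2))"
      using inv_sq_int by simp
    show "AE x in lborel. norm (t_density \<nu> x) \<le> norm (C * \<nu> * inverse (1 + x^2))"
      using b by simp
  qed
qed


lemma tCDF_Fd: "t_CDF \<nu> = Fd (t_density \<nu>)"
  by (auto simp: t_CDF_def Fd_def)

lemma tCDF_props:
  assumes "\<nu> \<ge> 1"
  shows "\<And>x y. x \<le> y \<Longrightarrow> t_CDF \<nu> x \<le> t_CDF \<nu> y"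
    and "\<And>x. t_CDF \<nu> x > 0"
    and "(t_CDF \<nu> \<longlongrightarrow> 0) at_bot"
proof -
  have p: "\<And>x. t_density \<nu> x > 0" using td_pos assms by simp
  note P = Fd_props[OF p td_int[OF assms], folded tCDF_Fd]
  show "\<And>x y. x \<le> y \<Longrightarrow> t_CDF \<nu> x \<le> t_CDF \<nu> y" "\<And>x. t_CDF \<nu> x > 0"
    "(t_CDF \<nu> \<longlongrightarrow> 0) at_bot" using P(1,3,4) by auto
qed

lemma g_meas:
  assumes "\<nu> \<ge> 1"
  shows "(\<lambda>y. Phi_inv (t_CDF \<nu> y)) \<in> borel_measurable borel"
proof -
  have "t_CDF \<nu> \<in> borel_measurable borel"
    by (rule borel_measurable_mono) (auto intro!: monoI tCDF_props(1)[OF assms])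
  then show ?thesis using Phi_inv_measurable by (rule measurable_compose)
qed

lemma g_sep:
  assumes nu: "\<nu> \<ge> 1"
  shows "\<exists>w y0. (\<forall>y\<ge>K. Phi_inv (t_CDF \<nu> y) > w) \<and> (\<forall>y\<le>y0. Phi_inv (t_CDF \<nu> y) < w)"
proof -
  let ?G = "t_CDF \<nu>"
  define q where "q = ?G K"
  have q: "q > 0" unfolding q_def by (rule tCDF_props(2)[OF nu])
  have "eventually (\<lambda>x. Phi x < q) at_bot"
    using order_tendstoD(2)[OF Phi_props(5) q] .
  moreover have "eventually (\<lambda>x. x < Phi_inv 2) at_bot"
    by (rule eventually_at_bot_linorderI[of "Phi_inv 2 - 1"]) simp
  ultimately have "eventually (\<lambda>x. Phi x < q \<and> x < Phi_inv 2) at_bot"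
    by (rule eventually_conj)
  then obtain w where w: "Phi w < q" "w < Phi_inv 2"
    by (auto simp: eventually_at_bot_linorder)
  have pw: "Phi w > 0" "Phi w < 1" using Phi_props(3,4) by auto
  have "eventually (\<lambda>y. ?G y < Phi w) at_bot"
    using order_tendstoD(2)[OF tCDF_props(3)[OF nu] pw(1)] .
  then obtain y0 where y0: "\<And>y. y \<le> y0 \<Longrightarrow> ?G y < Phi w"
    by (auto simp: eventually_at_bot_linorder)
  have A: "Phi_inv (?G y) > w" if "y \<ge> K" for y
  proof (cases "?G y < 1")
    case True
    have "?G y \<ge> q" unfolding q_def using tCDF_props(1)[OF nu that] .
    then have g: "Phi (Phi_inv (?G y)) > Phi w"
      using Phi_Phi_inv[OF tCDF_props(2)[OF nu] True] w(1) by simp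
    show ?thesis
    proof (rule ccontr)
      assume "\<not> ?thesis"
      then have "Phi (Phi_inv (?G y)) \<le> Phi w" by (intro Phi_props(1)) simp
      with g show False by simp
    qed
  next
    case False
    then have "Phi_inv (?G y) = Phi_inv 2" by (intro Phi_inv_out) simp
    with w(2) show ?thesis by simp
  qed
  have B: "Phi_inv (?G y) < w" if "y \<le> y0" for y
  proof -
    have lt: "?G y < Phi w" using y0[OF that] .
    then have g: "Phi (Phi_inv (?G y)) < Phi w"
      using Phi_Phi_inv[OF tCDF_props(2)[OF nu]] pw(2) by simp
    show ?thesis
    proof (rule ccontr)
      assume "\<not> ?thesis"
      then have "Phi w \<le> Phi (Phi_inv (?G y))" by (intro Phi_props(1)) simp
      with g show False by simp
    qed
  qed
  from A B show ?thesis by blast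
qed



lemma r_le:
  fixes x :: "nat \<Rightarrow> real"
  assumes "j < n"
  shows "\<bar>x j - c\<bar> \<le> sqrt (\<Sum>i<n. (x i - c)\<^sup>2)"
proof -
  have "(x j - c)\<^sup>2 \<le> (\<Sum>i<n. (x i - c)\<^sup>2)"
    using assms by (intro member_le_sum) auto
  then have "sqrt ((x j - c)\<^sup>2) \<le> sqrt (\<Sum>i<n. (x i - c)\<^sup>2)"
    by (rule real_sqrt_le_mono)
  then show ?thesis by simp
qed

lemma avg_le:
  fixes x :: "nat \<Rightarrow> real"
  assumes A: "A \<subseteq> {..<n}" "card A > 0"
  shows "\<bar>smean A x - c\<bar> \<le> sqrt (\<Sum>i<n. (x i - c)\<^sup>2)"
proof -
  let ?Q = "sqrt (\<Sum>i<n. (x i - c)\<^sup>2)"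
  have fin: "finite A" using A(2) card_ge_0_finite by blast
  have "smean A x - c = (\<Sum>j\<in>A. (x j - c)) / card A"
  proof -
    have "card A \<noteq> 0" using A(2) by simp
    then show ?thesis using fin by (simp add: smean_def sum_subtractf diff_divide_distrib)
  qed
  also have "\<bar>\<dots>\<bar> = \<bar>\<Sum>j\<in>A. (x j - c)\<bar> / card A" by simp
  also have "\<dots> \<le> (\<Sum>j\<in>A. \<bar>x j - c\<bar>) / card A"
    by (intro divide_right_mono sum_abs) simp
  also have "\<dots> \<le> (\<Sum>j\<in>A. ?Q) / card A"
    using A(1) by (intro divide_right_mono sum_mono r_le) auto
  also have "\<dots> = ?Q" using A(2) by simp
  finally show ?thesis .
qed

lemma R0_bound:
  fixes x :: "nat \<Rightarrow> real"
  assumes n: "n \<ge> 2" and N: "N \<subseteq> {..<n}" "card N > 0" "card ({..<n} - N) > 0"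
  shows "(smean N x - smean ({..<n} - N) x) / Sstar n x \<ge> - 2 * sqrt (real n - 1)"
proof -
  define m where "m = smean {..<n} x"
  define Q where "Q = (\<Sum>i<n. (x i - m)\<^sup>2)"
  have Q0: "Q \<ge> 0" unfolding Q_def by (intro sum_nonneg) auto
  have a1: "\<bar>smean N x - m\<bar> \<le> sqrt Q" unfolding Q_def by (rule avg_le[OF N(1,2)])
  have a2: "\<bar>smean ({..<n} - N) x - m\<bar> \<le> sqrt Q" unfolding Q_def by (rule avg_le) (use N(3) in auto)
  have V: "\<bar>smean N x - smean ({..<n} - N) x\<bar> \<le> 2 * sqrt Q" using a1 a2 by linarith
  have n1: "real n - 1 > 0" using n by simp
  have S: "Sstar n x = sqrt Q / sqrt (real n - 1)"
    unfolding Sstar_def Q_def m_def using n1 by (simp add: real_sqrt_divide)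
  show ?thesis
  proof (cases "Q = 0")
    case True
    then show ?thesis using S n by simp
  next
    case False
    then have sQ: "sqrt Q > 0" using Q0 by simp
    have sn: "sqrt (real n - 1) > 0" using n1 by simp
    have "\<bar>(smean N x - smean ({..<n} - N) x) / Sstar n x\<bar>
          = \<bar>smean N x - smean ({..<n} - N) x\<bar> * sqrt (real n - 1) / sqrt Q"
      using S sQ sn by (simp add: abs_div abs_mult)
    also have "\<dots> \<le> 2 * sqrt Q * sqrt (real n - 1) / sqrt Q"
      using V sQ sn by (intro divide_right_mono mult_right_mono) auto
    also have "\<dots> = 2 * sqrt (real n - 1)" using sQ by simp
    finally show ?thesis by linarith
  qed
qed


lemma R_small:
  fixes x :: "nat \<Rightarrow> real"
  assumes n: "n \<ge> 2" "n = 2 * k" and N: "N \<subseteq> {..<n}" "card N = k" and d: "\<delta> > 0"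
    and x0: "x 0 \<in> {-1-\<delta><..-1-\<delta>/2}"
    and xj: "\<And>j. 1 \<le> j \<Longrightarrow> j < n \<Longrightarrow> x j \<in> {-1-\<delta>/2<..-1}"
  shows "(smean N x + smean ({..<n} - N) x) / Sstar n x < - 1 / \<delta>"
proof -
  have k: "k > 0" using n by simp
  have cN': "card ({..<n} - N) = k" using N n by (simp add: card_Diff_subset finite_subset)
  have fN: "finite N" using N(1) finite_subset by blast
  have sumsplit: "(\<Sum>j<n. x j) = sum x ({..<n} - N) + sum x N"
    using N(1) by (simp add: sum.subset_diff)
  define m where "m = smean {..<n} x"
  have mdef: "m = (\<Sum>j<n. x j) / n" by (simp add: m_def smean_def)
  have V: "smean N x + smean ({..<n} - N) x = 2 * m"
  proof -
    have "smean N x + smean ({..<n} - N) x = (sum x N + sum x ({..<n} - N)) / k"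
      unfolding smean_def N(2) cN' by (simp add: add_divide_distrib)
    also have "\<dots> = 2 * ((\<Sum>j<n. x j) / n)"
      using k by (subst sumsplit) (simp add: n(2) field_simps)
    finally show ?thesis by (simp add: mdef)
  qed
  have xr: "x j \<in> {-1-\<delta><..-1}" if "j < n" for j
  proof (cases "j = 0")
    case True then show ?thesis using x0 d by auto
  next
    case False then show ?thesis using xj[of j] that d by auto
  qed
  have s1: "(\<Sum>j<n. x j) \<le> (\<Sum>j<n. -1)" by (intro sum_mono) (use xr in auto)
  have ne: "{..<n} \<noteq> {}" using n(1) by (simp add: lessThan_empty_iff)
  have s2: "(\<Sum>j<n. -1-\<delta>) < (\<Sum>j<n. x j)" by (intro sum_strict_mono) (use xr ne in auto)
  have nr: "real n > 0" using n by simp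
  have m1: "m \<le> -1" using s1 nr by (simp add: mdef divide_le_eq)
  have m2: "m > -1-\<delta>" using s2 nr by (simp add: mdef field_simps)
  define Q where "Q = (\<Sum>i<n. (x i - m)\<^sup>2)"
  have rj: "(x j - m)\<^sup>2 < \<delta>\<^sup>2" if "j < n" for j
  proof -
    have "\<bar>x j - m\<bar> < \<delta>" using xr[OF that] m1 m2 by auto
    then show ?thesis using d by (metis abs_ge_zero power2_abs power_strict_mono zero_less_numeral)
  qed
  have Qlt: "Q < (\<Sum>i<n. \<delta>\<^sup>2)" unfolding Q_def by (intro sum_strict_mono) (use rj ne in auto)
  then have Qlt': "Q < n * \<delta>\<^sup>2" by simp
  have Qge: "(x 0 - m)\<^sup>2 + (x 1 - m)\<^sup>2 \<le> Q"
  proof -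
    have "(\<Sum>i\<in>{0,1}. (x i - m)\<^sup>2) \<le> Q" unfolding Q_def
      by (intro sum_mono2) (use n in auto)
    then show ?thesis by simp
  qed
  have "x 0 \<noteq> x 1" using x0 xj[of 1] n d by auto
  then have "(x 0 - m)\<^sup>2 + (x 1 - m)\<^sup>2 > 0"
    by (metis add_nonneg_pos add_pos_nonneg diff_self eq_iff_diff_eq_0 not_less_iff_gr_or_eq zero_le_power2 zero_less_power2)
  then have Qp: "Q > 0" using Qge by linarith
  have n1: "real n - 1 > 0" using n by simp
  have S: "Sstar n x = sqrt (Q / (real n - 1))"
    unfolding Sstar_def Q_def m_def by simp
  have Sp: "Sstar n x > 0" using S Qp n1 by simp
  have "Q / (real n - 1) < n * \<delta>\<^sup>2 / (real n - 1)"
    using Qlt' n1 by (simp add: divide_strict_right_mono)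
  also have "\<dots> \<le> (2 * \<delta>)\<^sup>2"
  proof -
    have "real n \<le> 4 * (real n - 1)" using n by simp
    then have "n * \<delta>\<^sup>2 \<le> 4 * (real n - 1) * \<delta>\<^sup>2" by (intro mult_right_mono) auto
    then show ?thesis using n1 by (simp add: divide_le_eq power_mult_distrib algebra_simps)
  qed
  finally have "Sstar n x < 2 * \<delta>" using S d
    by (metis abs_of_pos mult_pos_pos real_sqrt_abs real_sqrt_less_mono zero_less_numeral)
  then have "1 / (2 * \<delta>) < 1 / Sstar n x" using Sp by (simp add: frac_less2)
  then have "- 2 / Sstar n x < - 1 / \<delta>" using d by (simp add: field_simps)
  moreover have "2 * m / Sstar n x \<le> - 2 / Sstar n x"
    using divide_right_mono[of "2 * m" "- 2" "Sstar n x"] m1 Sp by simp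
  ultimately show ?thesis using V by simp
qed



lemma setup_meas:
  fixes M :: "'a measure" and X :: "nat \<Rightarrow> 'a \<Rightarrow> real" and N1 :: "'a \<Rightarrow> nat set"
  assumes Xm: "\<And>j. j < n \<Longrightarrow> X j \<in> borel_measurable M"
    and N1m: "N1 \<in> measurable M (count_space UNIV)"
    and cN: "\<And>\<omega>. \<omega> \<in> space M \<Longrightarrow> N1 \<omega> \<subseteq> {..<n} \<and> card (N1 \<omega>) = k"
    and nk: "n = 2 * k"
  shows "(\<lambda>\<omega>. (smean (N1 \<omega>) (\<lambda>j. X j \<omega>) + smean ({..<n} - N1 \<omega>) (\<lambda>j. X j \<omega>)) / Sstar n (\<lambda>j. X j \<omega>)) \<in> borel_measurable M"
    and "(\<lambda>\<omega>. (smean (N1 \<omega>) (\<lambda>j. X j \<omega>) - smean ({..<n} - N1 \<omega>) (\<lambda>j. X j \<omega>)) / Sstar n (\<lambda>j. X j \<omega>)) \<in> borel_measurable M"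
proof -
  have Im: "(\<lambda>\<omega>. indicator (N1 \<omega>) j :: real) \<in> borel_measurable M" for j
    using measurable_compose[OF N1m, of "\<lambda>A. indicator A j" borel] by simp
  have Sm: "(\<lambda>\<omega>. Sstar n (\<lambda>j. X j \<omega>)) \<in> borel_measurable M"
    unfolding Sstar_def smean_def using Xm by measurable
  have s1: "smean (N1 \<omega>) (\<lambda>j. X j \<omega>) = (\<Sum>j<n. indicator (N1 \<omega>) j * X j \<omega>) / k" if "\<omega> \<in> space M" for \<omega>
  proof -
    have "sum (\<lambda>j. X j \<omega>) (N1 \<omega>) = sum (\<lambda>j. X j \<omega>) ({..<n} \<inter> N1 \<omega>)" using cN[OF that] by (metis inf.absorb_iff2)
    also have "\<dots> = (\<Sum>j<n. if j \<in> N1 \<omega> then X j \<omega> else 0)"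
      by (simp add: sum.inter_restrict)
    also have "\<dots> = (\<Sum>j<n. indicator (N1 \<omega>) j * X j \<omega>)"
      by (intro sum.cong) (auto simp: indicator_def)
    finally show ?thesis using cN[OF that] by (simp add: smean_def)
  qed
  have s2: "smean ({..<n} - N1 \<omega>) (\<lambda>j. X j \<omega>) = (\<Sum>j<n. (1 - indicator (N1 \<omega>) j) * X j \<omega>) / k" if "\<omega> \<in> space M" for \<omega>
  proof -
    have sub: "N1 \<omega> \<subseteq> {..<n}" and ck: "card (N1 \<omega>) = k" using cN[OF that] by auto
    have "finite (N1 \<omega>)" using sub finite_subset by blast
    then have c: "card ({..<n} - N1 \<omega>) = k" using sub ck nk by (simp add: card_Diff_subset)
    have "sum (\<lambda>j. X j \<omega>) ({..<n} - N1 \<omega>) = sum (\<lambda>j. X j \<omega>) ({..<n} \<inter> (- N1 \<omega>))" by (simp add: Diff_eq)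
    also have "\<dots> = (\<Sum>j<n. if j \<in> - N1 \<omega> then X j \<omega> else 0)"
      by (simp add: sum.inter_restrict)
    also have "\<dots> = (\<Sum>j<n. (1 - indicator (N1 \<omega>) j) * X j \<omega>)"
      by (intro sum.cong) (auto simp: indicator_def)
    finally show ?thesis using c by (simp add: smean_def)
  qed
  have Am: "(\<lambda>\<omega>. (\<Sum>j<n. indicator (N1 \<omega>) j * X j \<omega>) / real k) \<in> borel_measurable M"
    using Xm Im by measurable
  have Bm: "(\<lambda>\<omega>. (\<Sum>j<n. (1 - indicator (N1 \<omega>) j) * X j \<omega>) / real k) \<in> borel_measurable M"
    using Xm Im by measurable
  show "(\<lambda>\<omega>. (smean (N1 \<omega>) (\<lambda>j. X j \<omega>) + smean ({..<n} - N1 \<omega>) (\<lambda>j. X j \<omega>)) / Sstar n (\<lambda>j. X j \<omega>)) \<in> borel_measurable M"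
    by (rule measurable_cong[THEN iffD2, OF _ borel_measurable_divide[OF borel_measurable_add[OF Am Bm] Sm]])
       (simp add: s1 s2)
  show "(\<lambda>\<omega>. (smean (N1 \<omega>) (\<lambda>j. X j \<omega>) - smean ({..<n} - N1 \<omega>) (\<lambda>j. X j \<omega>)) / Sstar n (\<lambda>j. X j \<omega>)) \<in> borel_measurable M"
    by (rule measurable_cong[THEN iffD2, OF _ borel_measurable_divide[OF borel_measurable_diff[OF Am Bm] Sm]])
       (simp add: s1 s2)
qed


lemma event_pos:
  fixes M :: "'a measure" and X :: "nat \<Rightarrow> 'a \<Rightarrow> real"
  assumes P: "prob_space M"
    and ind: "prob_space.indep_vars M (\<lambda>_. borel) X {..<n}"
    and D: "\<And>j. j < n \<Longrightarrow> distributed M lborel (X j) std_normal_density"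
    and n: "n \<ge> 1" and ab: "\<And>j. j < n \<Longrightarrow> a j < b j"
  shows "measure M (\<Inter>j\<in>{..<n}. X j -` {a j<..b j} \<inter> space M) > 0"
proof -
  interpret prob_space M by (rule P)
  have each: "measure M (X j -` {a j<..b j} \<inter> space M) > 0" if j: "j < n" for j
  proof -
    have Xj: "X j \<in> measurable M lborel" using distributed_measurable[OF D[OF j]] .
    have "emeasure M (X j -` {a j<..b j} \<inter> space M) = emeasure (distr M lborel (X j)) {a j<..b j}"
      using Xj by (simp add: emeasure_distr)
    also have "\<dots> = emeasure (density lborel (\<lambda>x. ennreal (std_normal_density x))) {a j<..b j}"
      using distributed_distr_eq_density[OF D[OF j]] by simp
    finally have "measure M (X j -` {a j<..b j} \<inter> space M) = measure (density lborel (\<lambda>x. ennreal (std_normal_density x))) {a j<..b j}"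
      by (simp add: measure_def)
    also have "\<dots> > 0" by (rule dens_Ioc_pos[OF std_pos integrable_normal_density ab[OF j]]) simp
    finally show ?thesis .
  qed
  have I: "indep_sets (\<lambda>i. sigma_sets (space M) { X i -` A \<inter> space M | A. A \<in> sets borel}) {..<n}"
    using ind by (simp add: indep_vars_def)
  have "measure M (\<Inter>j\<in>{..<n}. X j -` {a j<..b j} \<inter> space M) = (\<Prod>j\<in>{..<n}. measure M (X j -` {a j<..b j} \<inter> space M))"
  proof (rule indep_setsD[OF I])
    show "{..<n} \<noteq> {}" using n by (simp add: lessThan_empty_iff)
    show "\<forall>j\<in>{..<n}. X j -` {a j<..b j} \<inter> space M \<in> sigma_sets (space M) {X j -` A \<inter> space M |A. A \<in> sets borel}"
      by (auto intro!: sigma_sets.Basic)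
  qed auto
  also have "\<dots> > 0" using each by (intro prod_pos) auto
  finally show ?thesis .
qed

theorem proposition5:
  fixes M :: "'a measure" and X :: "nat \<Rightarrow> 'a \<Rightarrow> real"
    and N1 :: "'a \<Rightarrow> nat set" and n :: nat
  assumes "prob_space M"
    and "even n" and "n \<ge> 4"
    and "prob_space.indep_vars M (\<lambda>_. borel) X {..<n}"
    and "\<And>j. j < n \<Longrightarrow> distributed M lborel (X j) std_normal_density"
    and "N1 \<in> measurable M (count_space UNIV)"
    and "\<And>\<omega>. \<omega> \<in> space M \<Longrightarrow> N1 \<omega> \<subseteq> {..<n} \<and> card (N1 \<omega>) = n div 2"
    and "prob_space.indep_var M (PiM {..<n} (\<lambda>_. borel)) (\<lambda>\<omega>. \<lambda>j\<in>{..<n}. X j \<omega>)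
           (PiM {..<n} (\<lambda>_. borel)) (\<lambda>\<omega>. \<lambda>j\<in>{..<n}. indicator (N1 \<omega>) j)"
  shows "distr M borel (\<lambda>\<omega>. Tstar n (N1 \<omega>) (\<lambda>j. X j \<omega>))
           \<noteq> distr M borel (\<lambda>\<omega>. T0star n (N1 \<omega>) (\<lambda>j. X j \<omega>))
       \<and> (\<forall>(m::nat) i (T :: nat \<Rightarrow> 'a \<Rightarrow> real) (T0 :: nat \<Rightarrow> 'a \<Rightarrow> real).
            i < m
            \<and> (\<forall>\<omega>\<in>space M. T i \<omega> = Tstar n (N1 \<omega>) (\<lambda>j. X j \<omega>)
                             \<and> T0 i \<omega> = T0star n (N1 \<omega>) (\<lambda>j. X j \<omega>))
            \<and> (\<forall>k<m. T k \<in> borel_measurable M \<and> T0 k \<in> borel_measurable M)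
            \<longrightarrow> distr M (PiM {..<m} (\<lambda>_. borel \<Otimes>\<^sub>M borel))
                   (\<lambda>\<omega>. \<lambda>k\<in>{..<m}. (T k \<omega>, T0 k \<omega>))
                \<noteq> distr M (PiM {..<m} (\<lambda>_. borel \<Otimes>\<^sub>M borel))
                   (\<lambda>\<omega>. \<lambda>k\<in>{..<m}. if k = i then (T0 k \<omega>, T k \<omega>) else (T k \<omega>, T0 k \<omega>)))"
proof -
  interpret P: prob_space M by (rule assms(1))
  define k where "k = n div 2"
  have nk: "n = 2 * k" using assms(2) unfolding k_def by (metis dvd_mult_div_cancel)
  have n2: "n \<ge> 2" and n1: "n \<ge> 1" and kp: "k > 0" using assms(3) nk by auto
  have ne: "{..<n} \<noteq> {}" using n1 by (simp add: lessThan_empty_iff)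
  define \<nu> where "\<nu> = real n - 2"
  have nu: "\<nu> \<ge> 1" using assms(3) unfolding \<nu>_def by simp
  define gg where "gg = (\<lambda>y. Phi_inv (t_CDF \<nu> y))"
  define R where "R = (\<lambda>\<omega>. (smean (N1 \<omega>) (\<lambda>j. X j \<omega>) + smean ({..<n} - N1 \<omega>) (\<lambda>j. X j \<omega>)) / Sstar n (\<lambda>j. X j \<omega>))"
  define R0 where "R0 = (\<lambda>\<omega>. (smean (N1 \<omega>) (\<lambda>j. X j \<omega>) - smean ({..<n} - N1 \<omega>) (\<lambda>j. X j \<omega>)) / Sstar n (\<lambda>j. X j \<omega>))"
  define TT where "TT = (\<lambda>\<omega>. Tstar n (N1 \<omega>) (\<lambda>j. X j \<omega>))"
  define TT0 where "TT0 = (\<lambda>\<omega>. T0star n (N1 \<omega>) (\<lambda>j. X j \<omega>))"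
  have TTe: "TT = (\<lambda>\<omega>. gg (R \<omega>))" by (simp add: fun_eq_iff TT_def Tstar_def gg_def R_def \<nu>_def)
  have TT0e: "TT0 = (\<lambda>\<omega>. gg (R0 \<omega>))" by (simp add: fun_eq_iff TT0_def T0star_def gg_def R0_def \<nu>_def)
  have cN: "\<And>\<omega>. \<omega> \<in> space M \<Longrightarrow> N1 \<omega> \<subseteq> {..<n} \<and> card (N1 \<omega>) = k"
    using assms(7) unfolding k_def by blast
  have Xm: "\<And>j. j < n \<Longrightarrow> X j \<in> borel_measurable M"
    using distributed_measurable[OF assms(5)] by simp
  have Rm: "R \<in> borel_measurable M" unfolding R_def by (rule setup_meas(1)[OF Xm assms(6) cN nk])
  have R0m: "R0 \<in> borel_measurable M" unfolding R0_def by (rule setup_meas(2)[OF Xm assms(6) cN nk])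
  have ggm: "gg \<in> borel_measurable borel" using g_meas[OF nu] by (simp add: gg_def)
  have TTm: "TT \<in> borel_measurable M" unfolding TTe using measurable_compose[OF Rm ggm] by (simp add: comp_def)
  have TT0m: "TT0 \<in> borel_measurable M" unfolding TT0e using measurable_compose[OF R0m ggm] by (simp add: comp_def)
  obtain w y0 where w: "\<forall>y\<ge>- 2 * sqrt (real n - 1). gg y > w" "\<forall>y\<le>y0. gg y < w"
    using g_sep[OF nu, of "- 2 * sqrt (real n - 1)"] unfolding gg_def by blast
  have T0big: "TT0 \<omega> > w" if "\<omega> \<in> space M" for \<omega>
  proof -
    have sub: "N1 \<omega> \<subseteq> {..<n}" and ck: "card (N1 \<omega>) = k" using cN[OF that] by auto
    have "finite (N1 \<omega>)" using sub finite_subset by blast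
    then have c: "card ({..<n} - N1 \<omega>) = k" using sub ck nk by (simp add: card_Diff_subset)
    have "R0 \<omega> \<ge> - 2 * sqrt (real n - 1)" unfolding R0_def
      by (rule R0_bound[OF n2 sub]) (use ck c kp in auto)
    then show ?thesis using w(1) by (simp add: TT0e)
  qed
  define \<delta> where "\<delta> = 1 / (\<bar>y0\<bar> + 1)"
  have dp: "\<delta> > 0" unfolding \<delta>_def by (simp add: add_pos_nonneg)
  have dy: "- 1 / \<delta> \<le> y0" unfolding \<delta>_def by simp
  define a where "a = (\<lambda>j::nat. if j = 0 then -1-\<delta> else -1-\<delta>/2)"
  define b where "b = (\<lambda>j::nat. if j = 0 then -1-\<delta>/2 else -1)"
  define E where "E = (\<Inter>j\<in>{..<n}. X j -` {a j<..b j} \<inter> space M)"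
  have Epos: "measure M E > 0" unfolding E_def
    by (rule event_pos[OF assms(1) assms(4) assms(5) n1]) (use dp in \<open>auto simp: a_def b_def\<close>)
  have Esets: "E \<in> sets M" unfolding E_def using Xm n1
    by (intro sets.countable_INT') (auto simp: lessThan_empty_iff)
  have ET: "E \<subseteq> TT -` {..<w} \<inter> space M"
  proof
    fix \<omega> assume "\<omega> \<in> E"
    then have om: "\<omega> \<in> space M" and xin: "\<And>j. j < n \<Longrightarrow> X j \<omega> \<in> {a j<..b j}"
      unfolding E_def using ne by auto
    have sub: "N1 \<omega> \<subseteq> {..<n}" and ck: "card (N1 \<omega>) = k" using cN[OF om] by auto
    have "R \<omega> < - 1 / \<delta>" unfolding R_def
    proof (rule R_small[OF n2 nk sub ck dp])
      show "X 0 \<omega> \<in> {- 1 - \<delta><..- 1 - \<delta> / 2}" using xin[of 0] n1 by (simp add: a_def b_def)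
      show "X j \<omega> \<in> {- 1 - \<delta> / 2<..- 1}" if "1 \<le> j" "j < n" for j
        using xin[OF that(2)] that(1) by (simp add: a_def b_def)
    qed
    then have "gg (R \<omega>) < w" using w(2) dy by simp
    then show "\<omega> \<in> TT -` {..<w} \<inter> space M" using om by (simp add: TTe)
  qed
  have "emeasure M E \<le> emeasure M (TT -` {..<w} \<inter> space M)"
    by (rule emeasure_mono[OF ET]) (use TTm in measurable)
  moreover have "emeasure M E > 0" using Epos P.emeasure_eq_measure by simp
  ultimately have d1: "emeasure (distr M borel TT) {..<w} > 0"
    using TTm by (simp add: emeasure_distr)
  have "TT0 -` {..<w} \<inter> space M = {}" using T0big by force
  then have d2: "emeasure (distr M borel TT0) {..<w} = 0"
    using TT0m by (simp add: emeasure_distr)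
  have C1: "distr M borel TT \<noteq> distr M borel TT0" using d1 d2 by auto
  show ?thesis
  proof (intro conjI allI impI)
    show "distr M borel (\<lambda>\<omega>. Tstar n (N1 \<omega>) (\<lambda>j. X j \<omega>)) \<noteq> distr M borel (\<lambda>\<omega>. T0star n (N1 \<omega>) (\<lambda>j. X j \<omega>))"
      using C1 by (simp add: TT_def TT0_def)
    fix m i and T T0 :: "nat \<Rightarrow> 'a \<Rightarrow> real"
    assume H: "i < m \<and> (\<forall>\<omega>\<in>space M. T i \<omega> = Tstar n (N1 \<omega>) (\<lambda>j. X j \<omega>) \<and> T0 i \<omega> = T0star n (N1 \<omega>) (\<lambda>j. X j \<omega>))
            \<and> (\<forall>k<m. T k \<in> borel_measurable M \<and> T0 k \<in> borel_measurable M)"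
    let ?PP = "PiM {..<m} (\<lambda>_. borel \<Otimes>\<^sub>M borel) :: (nat \<Rightarrow> real \<times> real) measure"
    let ?F = "\<lambda>\<omega>. \<lambda>k\<in>{..<m}. (T k \<omega>, T0 k \<omega>)"
    let ?G = "\<lambda>\<omega>. \<lambda>k\<in>{..<m}. if k = i then (T0 k \<omega>, T k \<omega>) else (T k \<omega>, T0 k \<omega>)"
    have im: "i \<in> {..<m}" using H by simp
    have Fm: "?F \<in> measurable M ?PP"
      by (rule measurable_restrict) (use H in auto)
    have Gm: "?G \<in> measurable M ?PP"
      by (rule measurable_restrict) (use H in auto)
    have pim: "(\<lambda>x. fst (x i)) \<in> measurable ?PP borel"
      using im by measurable
    show "distr M ?PP ?F \<noteq> distr M ?PP ?G"
    proof
      assume eq: "distr M ?PP ?F = distr M ?PP ?G"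
      have "distr M borel ((\<lambda>x. fst (x i)) \<circ> ?F) = distr M borel ((\<lambda>x. fst (x i)) \<circ> ?G)"
        using distr_distr[OF pim Fm] distr_distr[OF pim Gm] eq by simp
      moreover have "distr M borel ((\<lambda>x. fst (x i)) \<circ> ?F) = distr M borel TT"
        by (rule distr_cong) (use H im in \<open>auto simp: TT_def\<close>)
      moreover have "distr M borel ((\<lambda>x. fst (x i)) \<circ> ?G) = distr M borel TT0"
        by (rule distr_cong) (use H im in \<open>auto simp: TT0_def\<close>)
      ultimately show False using C1 by simp
    qed
  qed
qed


end
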